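(* Let $r\in(0,1)$ and $\lambda(r)=\ln\frac{1+r}{1-r}$. Let $\overline{S}_{\lambda(r)}=\{z\in\mathbb{S}: d_{\mathbb{S}}(z,0)\leqslant\lambda(r)\}$. Then $$\overline{S}_{\lambda(r)}\subset\left[-\frac{4}{\pi}\arctan r,\frac{4}{\pi}\arctan r\right]\times\left[-\frac{2}{\pi}\lambda(r),\frac{2}{\pi}\lambda(r)\right]$$ (as a subset of $\mathbb{C}\cong\mathbb{R}^2$, real part times imaginary part), and moreover $$\{\operatorname{Re} z : z\in \overline{S}_{\lambda(r)}\}=\left[-\frac{4}{\pi}\arctan r,\frac{4}{\pi}\arctan r\right].$$
   Context: $\mathbb{S}=\{z\in\mathbb{C}:-1<\operatorname{Re} z<1\}$. The hyperbolic density of $\mathbb{S}$ is $\rho_{\mathbb{S}}(z)=\frac{\pi}{2}\big/\cos\left(\frac{\pi}{2}\operatorname{Re} z\right)$ and $d_{\mathbb{S}}(z_1,z_2)=\inf_\gamma\int_\gamma\rho_{\mathbb{S}}(z)|dz|$ over $C^1$ curves $\gamma$ in $\mathbb{S}$ joining $z_1$ to $z_2$ (this is the hyperbolic distance of $\mathbb{S}$ transported from the unit disc $\mathbb{U}$, whose density is $\frac{2}{1-|z|^2}$, by the conformal map $z\mapsto\tan(\pi z/4)$ from $\mathbb{S}$ onto $\mathbb{U}$). *)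

theory Defs
  imports "HOL-Analysis.Analysis"
begin

definition strip :: "complex set" where
  "strip = {z. -1 < Re z \<and> Re z < 1}"

definition rho_strip :: "complex \<Rightarrow> real" where
  "rho_strip z = (pi / 2) / cos (pi / 2 * Re z)"

definition strip_curves :: "complex \<Rightarrow> complex \<Rightarrow> (real \<Rightarrow> complex) set" where
  "strip_curves z1 z2 = {g. g C1_differentiable_on {0..1} \<and> g ` {0..1} \<subseteq> strip
      \<and> g 0 = z1 \<and> g 1 = z2}"

definition hyp_length_strip :: "(real \<Rightarrow> complex) \<Rightarrow> real" where
  "hyp_length_strip g = integral {0..1} (\<lambda>t. rho_strip (g t) * norm (vector_derivative g (at t within {0..1})))"

definition d_strip :: "complex \<Rightarrow> complex \<Rightarrow> real" where
  "d_strip z1 z2 = Inf (hyp_length_strip ` strip_curves z1 z2)"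

definition lambda_r :: "real \<Rightarrow> real" where
  "lambda_r r = ln ((1 + r) / (1 - r))"

definition closed_hyp_disc_strip :: "real \<Rightarrow> complex set" where
  "closed_hyp_disc_strip R = {z \<in> strip. d_strip z 0 \<le> R}"

end

theory Submission
  imports Defs
begin

definition FF :: "real \<Rightarrow> real" where
  "FF x = ln ((1 + sin (pi/2*x)) / cos (pi/2*x))"

lemma cos_pos: "\<bar>x\<bar> < 1 \<Longrightarrow> cos (pi/2*x) > 0"
proof (rule cos_gt_zero_pi)
  assume "\<bar>x\<bar> < 1"
  then have "-1 < x" "x < 1" by auto
  then have "pi/2*(-1) < pi/2*x" "pi/2*x < pi/2*1"
    by (intro mult_strict_left_mono; simp)+
  then show "-(pi/2) < pi/2*x" "pi/2*x < pi/2" by auto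
qed

lemma sin_bd: "\<bar>x\<bar> < 1 \<Longrightarrow> 1 + sin (pi/2*x) > 0"
proof -
  assume "\<bar>x\<bar> < 1"
  then have c: "cos (pi/2*x) > 0" by (rule cos_pos)
  have "sin (pi/2*x) \<ge> -1" by simp
  moreover have "sin (pi/2*x) \<noteq> -1"
  proof
    assume "sin (pi/2*x) = -1"
    then have "(cos (pi/2*x))^2 = 0" using sin_cos_squared_add[of "pi/2*x"] by simp
    then show False using c by simp
  qed
  ultimately show ?thesis by linarith
qed

lemma FF_deriv: "\<bar>x\<bar> < 1 \<Longrightarrow> (FF has_real_derivative (pi/2) / cos (pi/2*x)) (at x)"
proof -
  assume x: "\<bar>x\<bar> < 1"
  let ?s = "sin (pi/2*x)" and ?c = "cos (pi/2*x)"
  have c: "?c > 0" using cos_pos[OF x] .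
  have s: "1 + ?s > 0" using sin_bd[OF x] .
  have e: "?c^2 + ?s^2 = 1" by simp
  have alg: "\<And>a b p::real. (a*p)*a - (1+b)*(-b*p) = p*(a^2+b^2) + p*b"
    by (simp add: algebra_simps power2_eq_square)
  have q: "((\<lambda>x. (1 + sin (pi/2*x)) / cos (pi/2*x)) has_real_derivative
      ((cos (pi/2*x) * (pi/2)) * ?c - (1 + ?s) * (- sin (pi/2*x) * (pi/2))) / (?c * ?c)) (at x)"
    by (rule derivative_eq_intros refl | use c in simp)+
  have "(FF has_real_derivative (1 / ((1 + ?s) / ?c)) *
      (((cos (pi/2*x) * (pi/2)) * ?c - (1 + ?s) * (- sin (pi/2*x) * (pi/2))) / (?c * ?c))) (at x)"
    unfolding FF_def[abs_def]
    by (rule DERIV_ln_divide[THEN DERIV_chain2] q, use c s in simp, rule q)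
  moreover have "(1 / ((1 + ?s) / ?c)) *
      (((cos (pi/2*x) * (pi/2)) * ?c - (1 + ?s) * (- sin (pi/2*x) * (pi/2))) / (?c * ?c))
      = (pi/2)/?c"
  proof -
    have "(cos (pi/2*x) * (pi/2)) * ?c - (1 + ?s) * (- sin (pi/2*x) * (pi/2)) = (pi/2)*(1+?s)"
    proof -
      have "(cos (pi/2*x) * (pi/2)) * ?c - (1 + ?s) * (- sin (pi/2*x) * (pi/2))
          = (pi/2)*(?c^2 + ?s^2) + (pi/2)*?s"
        by (rule alg)
      also have "\<dots> = (pi/2)*(1+?s)" unfolding e by (simp add: algebra_simps)
      finally show ?thesis .
    qed
    then have "(1 / ((1 + ?s) / ?c)) *
      (((cos (pi/2*x) * (pi/2)) * ?c - (1 + ?s) * (- sin (pi/2*x) * (pi/2))) / (?c * ?c))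
      = (1 / ((1 + ?s) / ?c)) * ((pi/2)*(1+?s) / (?c * ?c))" by (simp only:)
    also have "\<dots> = (pi/2)/?c"
    proof -
      have alg2: "\<And>a b p::real. a > 0 \<Longrightarrow> b > 0 \<Longrightarrow> (1/(b/a))*(p*b/(a*a)) = p/a"
        by (simp add: field_simps power2_eq_square)
      show ?thesis by (rule alg2[OF c s])
    qed
    finally show ?thesis .
  qed
  ultimately show ?thesis by simp
qed
lemma FF_0: "FF 0 = 0" by (simp add: FF_def)

lemma FF_odd: "\<bar>x\<bar> < 1 \<Longrightarrow> FF (-x) = - FF x"
proof -
  assume x: "\<bar>x\<bar> < 1"
  let ?s = "sin (pi/2*x)" and ?c = "cos (pi/2*x)"
  have c: "?c > 0" using cos_pos[OF x] .
  have s: "1 + ?s > 0" using sin_bd[OF x] .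
  have "1 - ?s > 0" using sin_bd[of "-x"] x by simp
  have e: "?c*?c = (1 - ?s)*(1 + ?s)" using sin_cos_squared_add[of "pi/2*x"]
    by (simp add: algebra_simps power2_eq_square)
  have "(1 - ?s)/?c = inverse ((1 + ?s)/?c)"
    using c s e by (simp add: field_simps)
  then have "FF (-x) = ln (inverse ((1 + ?s)/?c))" by (simp add: FF_def)
  also have "\<dots> = - FF x" using c s by (simp add: FF_def ln_div)
  finally show ?thesis .
qed

lemma FF_strict: "-1 < a \<Longrightarrow> a < b \<Longrightarrow> b < 1 \<Longrightarrow> FF a < FF b"
proof (rule DERIV_pos_imp_increasing[of a b FF])
  fix x assume "-1 < a" "a < b" "b < 1" "a \<le> x" "x \<le> b"
  then have x: "\<bar>x\<bar> < 1" by auto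
  show "\<exists>y. (FF has_real_derivative y) (at x) \<and> 0 < y"
  proof -
    have "0 < pi/2/cos(pi/2*x)" using cos_pos[OF x] by simp
    then show ?thesis using FF_deriv[OF x] by blast
  qed
qed

lemma FF_mono: "-1 < a \<Longrightarrow> a \<le> b \<Longrightarrow> b < 1 \<Longrightarrow> FF a \<le> FF b"
  using FF_strict[of a b] by (cases "a = b") auto

lemma FF_a0:
  assumes "0 < r" "r < 1"
  shows "FF ((4/pi) * arctan r) = lambda_r r"
proof -
  have q: "1 + r^2 > 0" by (simp add: add_pos_nonneg)
  have a: "pi/2*((4/pi) * arctan r) = 2 * arctan r" by simp
  have sq: "sqrt (1 + r^2) * sqrt (1 + r^2) = 1 + r^2" using q by simp
  have "sin (2 * arctan r) = 2 * r / (1 + r^2)"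
    unfolding sin_double sin_arctan cos_arctan using sq q by (simp add: field_simps)
  moreover have "cos (2 * arctan r) = (1 - r^2) / (1 + r^2)"
    unfolding cos_double sin_arctan cos_arctan using sq q
    by (simp add: field_simps power2_eq_square power_divide)
  ultimately have "FF ((4/pi) * arctan r) = ln ((1 + 2 * r / (1 + r^2)) / ((1 - r^2) / (1 + r^2)))"
    unfolding FF_def a by simp
  also have "(1 + 2 * r / (1 + r^2)) / ((1 - r^2) / (1 + r^2)) = (1 + r) / (1 - r)"
  proof -
    have h1: "1 + 2 * r / (1 + r^2) = (1+r)*(1+r)/(1+r^2)" using q by (simp add: field_simps power2_eq_square)
    have h2: "1 - r^2 = (1-r)*(1+r)" by (simp add: algebra_simps power2_eq_square)
    have "1 - r > 0" "1 + r > 0" using assms by auto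
    moreover have alg: "\<And>a b q::real. a > 0 \<Longrightarrow> b > 0 \<Longrightarrow> q > 0 \<Longrightarrow> (a*a/q)/(b*a/q) = a/b"
      by (simp add: field_simps)
    ultimately show ?thesis unfolding h1 h2 using q alg[of "1+r" "1-r" "1+r^2"] by simp
  qed
  finally show ?thesis by (simp add: lambda_r_def)
qed

lemma a0_bounds:
  assumes "0 < r" "r < 1"
  shows "0 < (4/pi) * arctan r" "(4/pi) * arctan r < 1"
proof -
  have "arctan r < arctan 1" using assms arctan_less_iff[of r 1] by blast
  then have at: "arctan r < pi/4" by (simp only: arctan_one)
  have "(4/pi) * arctan r < (4/pi) * (pi/4)" by (rule mult_strict_left_mono[OF at]) auto
  then show "(4/pi) * arctan r < 1" by simp
  show "0 < (4/pi) * arctan r" using assms by (simp add: arctan_zero_zero)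
qed

lemma rho_cont: "continuous_on strip rho_strip"
  unfolding rho_strip_def[abs_def]
proof (intro continuous_intros ballI)
  fix z assume "z \<in> strip"
  then have "\<bar>Re z\<bar> < 1" by (auto simp: strip_def)
  from cos_pos[OF this] show "cos (pi/2 * Re z) \<noteq> 0" by simp
qed

lemma rho_eq: "rho_strip z = (pi/2) / cos (pi/2 * Re z)" by (simp add: rho_strip_def)

lemma curveD:
  assumes "g \<in> strip_curves z1 z2"
  obtains D where "\<And>t. t \<in> {0..1} \<Longrightarrow> (g has_vector_derivative D t) (at t)"
    "continuous_on {0..1} D"
    "\<And>t. t \<in> {0..1} \<Longrightarrow> vector_derivative g (at t within {0..1}) = D t"
    "continuous_on {0..1} g" "g ` {0..1} \<subseteq> strip" "g 0 = z1" "g 1 = z2"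
proof -
  from assms obtain D where D: "\<forall>t\<in>{0..1}. (g has_vector_derivative D t) (at t)" "continuous_on {0..1} D"
    and gs: "g ` {0..1} \<subseteq> strip" "g 0 = z1" "g 1 = z2"
    unfolding strip_curves_def C1_differentiable_on_def by auto
  have vd: "vector_derivative g (at t within {0..1}) = D t" if "t \<in> {0..1}" for t
    by (rule vector_derivative_within_closed_interval) (use that D in \<open>auto intro: has_vector_derivative_at_within\<close>)
  have "continuous_on {0..1} g"
    by (rule continuous_at_imp_continuous_on) (use D in \<open>auto intro: has_vector_derivative_continuous\<close>)
  then show ?thesis using that D gs vd by blast
qed

lemma length_has_integral:
  assumes "g \<in> strip_curves z1 z2"
    and "\<And>t. t \<in> {0..1} \<Longrightarrow> (g has_vector_derivative D t) (at t)"
    and "continuous_on {0..1} D"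
  shows "((\<lambda>t. rho_strip (g t) * norm (D t)) has_integral hyp_length_strip g) {0..1}"
proof -
  obtain D' where D': "\<And>t. t \<in> {0..1} \<Longrightarrow> (g has_vector_derivative D' t) (at t)"
    "\<And>t. t \<in> {0..1} \<Longrightarrow> vector_derivative g (at t within {0..1}) = D' t"
    "continuous_on {0..1} g" "g ` {0..1} \<subseteq> strip"
    using curveD[OF assms(1)] by metis
  have eqD: "D' t = D t" if "t \<in> {0..1}" for t
    using D'(1)[OF that] assms(2)[OF that] vector_derivative_unique_at by blast
  have "continuous_on {0..1} (\<lambda>t. rho_strip (g t) * norm (D t))"
    by (intro continuous_intros continuous_on_compose2[OF rho_cont D'(3) D'(4)] assms(3))
  then have i: "(\<lambda>t. rho_strip (g t) * norm (D t)) integrable_on {0..1}"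
    by (rule integrable_continuous_interval)
  have "hyp_length_strip g = integral {0..1} (\<lambda>t. rho_strip (g t) * norm (D t))"
    unfolding hyp_length_strip_def by (rule integral_cong) (simp add: D'(2) eqD)
  then show ?thesis using i by (simp add: integrable_integral)
qed

lemma lower:
  assumes g: "g \<in> strip_curves z1 z2"
    and hd: "\<And>t D. t \<in> {0..1} \<Longrightarrow> (g has_vector_derivative D) (at t) \<Longrightarrow>
       \<exists>y. (h has_real_derivative y) (at t within {0..1}) \<and> y \<le> rho_strip (g t) * norm D"
  shows "h 1 - h 0 \<le> hyp_length_strip g"
proof -
  obtain D where D: "\<And>t. t \<in> {0..1} \<Longrightarrow> (g has_vector_derivative D t) (at t)"
    "continuous_on {0..1} D"
    using curveD[OF g] by metis
  have "\<forall>t\<in>{0..1}. \<exists>y. (h has_real_derivative y) (at t within {0..1}) \<and> y \<le> rho_strip (g t) * norm (D t)"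
    using hd D(1) by blast
  then obtain h' where h': "\<And>t. t\<in>{0..1} \<Longrightarrow> (h has_real_derivative h' t) (at t within {0..1})
      \<and> h' t \<le> rho_strip (g t) * norm (D t)"
    by metis
  have "(h' has_integral (h 1 - h 0)) {0..1}"
    by (rule fundamental_theorem_of_calculus)
       (use h' in \<open>auto simp: has_real_derivative_iff_has_vector_derivative\<close>)
  then show ?thesis
    by (rule has_integral_le[OF _ length_has_integral[OF g D]]) (use h' in auto)
qed

lemma Re_deriv:
  "(g has_vector_derivative D) F \<Longrightarrow> ((\<lambda>t. Re (g t)) has_real_derivative Re D) F"
  unfolding has_real_derivative_iff_has_vector_derivative has_vector_derivative_def
  by (drule has_derivative_Re) simp

lemma Im_deriv:
  "(g has_vector_derivative D) F \<Longrightarrow> ((\<lambda>t. Im (g t)) has_real_derivative Im D) F"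
  unfolding has_real_derivative_iff_has_vector_derivative has_vector_derivative_def
  by (drule has_derivative_Im) simp

lemma in_strip: "g \<in> strip_curves z1 z2 \<Longrightarrow> t \<in> {0..1} \<Longrightarrow> \<bar>Re (g t)\<bar> < 1"
  unfolding strip_curves_def strip_def by (force simp: abs_less_iff)

lemma lower_Re:
  assumes g: "g \<in> strip_curves z 0" and sg: "\<bar>\<sigma>\<bar> = 1"
  shows "\<sigma> * FF (Re z) \<le> hyp_length_strip g"
proof -
  have z: "g 0 = z" "g 1 = 0" using g by (auto simp: strip_curves_def)
  have "(\<lambda>t. - \<sigma> * FF (Re (g t))) 1 - (\<lambda>t. - \<sigma> * FF (Re (g t))) 0 \<le> hyp_length_strip g"
  proof (rule lower[OF g])
    fix t D assume t: "t \<in> {0..1}" and D: "(g has_vector_derivative D) (at t)"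
    have x: "\<bar>Re (g t)\<bar> < 1" by (rule in_strip[OF g t])
    have "((\<lambda>t. - \<sigma> * FF (Re (g t))) has_real_derivative
        - \<sigma> * ((pi/2) / cos (pi/2 * Re (g t)) * Re D)) (at t within {0..1})"
      using DERIV_cmult[OF DERIV_chain2[of FF _ "\<lambda>t. Re (g t)", OF FF_deriv[OF x] Re_deriv[OF has_vector_derivative_at_within[OF D]]], of "- \<sigma>"]
      by simp
    moreover have "- \<sigma> * ((pi/2) / cos (pi/2 * Re (g t)) * Re D) \<le> rho_strip (g t) * norm D"
    proof -
      have p: "(pi/2) / cos (pi/2 * Re (g t)) > 0" using cos_pos[OF x] by simp
      have "- \<sigma> * ((pi/2) / cos (pi/2 * Re (g t)) * Re D) \<le> \<bar>- \<sigma> * ((pi/2) / cos (pi/2 * Re (g t)) * Re D)\<bar>"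
        by linarith
      also have "\<dots> = (pi/2) / cos (pi/2 * Re (g t)) * \<bar>Re D\<bar>" using sg p cos_pos[OF x] by (simp add: abs_mult)
      also have "\<dots> \<le> (pi/2) / cos (pi/2 * Re (g t)) * norm D"
        using p abs_Re_le_cmod[of D] by (intro mult_left_mono) auto
      finally show ?thesis by (simp add: rho_eq)
    qed
    ultimately show "\<exists>y. ((\<lambda>t. - \<sigma> * FF (Re (g t))) has_real_derivative y) (at t within {0..1}) \<and>
        y \<le> rho_strip (g t) * norm D" by blast
  qed
  then show ?thesis using z by (simp add: FF_0)
qed

lemma lower_Im:
  assumes g: "g \<in> strip_curves z 0" and sg: "\<bar>\<sigma>\<bar> = 1"
  shows "\<sigma> * (pi/2) * Im z \<le> hyp_length_strip g"
proof -
  have z: "g 0 = z" "g 1 = 0" using g by (auto simp: strip_curves_def)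
  have "(\<lambda>t. - \<sigma> * (pi/2) * Im (g t)) 1 - (\<lambda>t. - \<sigma> * (pi/2) * Im (g t)) 0 \<le> hyp_length_strip g"
  proof (rule lower[OF g])
    fix t D assume t: "t \<in> {0..1}" and D: "(g has_vector_derivative D) (at t)"
    have x: "\<bar>Re (g t)\<bar> < 1" by (rule in_strip[OF g t])
    have "((\<lambda>t. - \<sigma> * (pi/2) * Im (g t)) has_real_derivative
        - \<sigma> * (pi/2) * Im D) (at t within {0..1})"
      using DERIV_cmult[OF Im_deriv[OF has_vector_derivative_at_within[OF D]], of "- \<sigma> * (pi/2)"]
      by simp
    moreover have "- \<sigma> * (pi/2) * Im D \<le> rho_strip (g t) * norm D"
    proof -
      have c: "0 < cos (pi/2 * Re (g t))" "cos (pi/2 * Re (g t)) \<le> 1" using cos_pos[OF x] by auto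
      have p: "pi/2 \<le> (pi/2) / cos (pi/2 * Re (g t))"
        using c by (simp add: field_simps)
      have "- \<sigma> * (pi/2) * Im D \<le> \<bar>- \<sigma> * (pi/2) * Im D\<bar>"
        by linarith
      also have "\<dots> = (pi/2) * \<bar>Im D\<bar>" using sg by (simp add: abs_mult)
      also have "\<dots> \<le> (pi/2) / cos (pi/2 * Re (g t)) * norm D"
        using p abs_Im_le_cmod[of D] c by (intro mult_mono) auto
      finally show ?thesis by (simp add: rho_eq)
    qed
    ultimately show "\<exists>y. ((\<lambda>t. - \<sigma> * (pi/2) * Im (g t)) has_real_derivative y) (at t within {0..1}) \<and>
        y \<le> rho_strip (g t) * norm D" by blast
  qed
  then show ?thesis using z by simp
qed

lemma lower_0:
  assumes g: "g \<in> strip_curves z1 z2"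
  shows "0 \<le> hyp_length_strip g"
proof -
  have "(\<lambda>t. 0::real) 1 - (\<lambda>t. 0) 0 \<le> hyp_length_strip g"
  proof (rule lower[OF g])
    fix t D assume t: "t \<in> {0..1}" and D: "(g has_vector_derivative D) (at t)"
    have x: "\<bar>Re (g t)\<bar> < 1" by (rule in_strip[OF g t])
    have "0 \<le> rho_strip (g t) * norm D" using cos_pos[OF x] by (simp add: rho_eq)
    then show "\<exists>y. ((\<lambda>t. 0) has_real_derivative y) (at t within {0..1}) \<and>
        y \<le> rho_strip (g t) * norm D" by (intro exI[of _ 0]) auto
  qed
  then show ?thesis by simp
qed

lemma seg_curve:
  assumes z: "z \<in> strip"
  shows "(\<lambda>t. of_real (1 - t) * z) \<in> strip_curves z 0"
proof -
  have d: "((\<lambda>t. of_real (1 - t) * z) has_vector_derivative - z) (at t)" for t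
  proof -
    have "((\<lambda>t. of_real (1 - t)) has_vector_derivative (of_real (-1) :: complex)) (at t)"
      by (rule has_vector_derivative_of_real) (auto intro!: derivative_eq_intros)
    from has_vector_derivative_mult_left[OF this, of z] show ?thesis by simp
  qed
  have "(\<lambda>t. of_real (1 - t) * z) C1_differentiable_on {0..1}"
    unfolding C1_differentiable_on_def using d by (intro exI[of _ "\<lambda>t. - z"]) auto
  moreover have "(\<lambda>t. of_real (1 - t) * z) ` {0..1} \<subseteq> strip"
  proof
    fix w assume "w \<in> (\<lambda>t. of_real (1 - t) * z) ` {0..1}"
    then obtain t where t: "t \<in> {0..1}" "w = of_real (1 - t) * z" by auto
    have "-1 < Re z" "Re z < 1" using z by (auto simp: strip_def)
    moreover have "Re w = (1 - t) * Re z" using t by simp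
    moreover have "0 \<le> 1 - t" "1 - t \<le> 1" using t by auto
    ultimately have "\<bar>Re w\<bar> = (1 - t) * \<bar>Re z\<bar>" by (simp add: abs_mult)
    also have "\<dots> \<le> 1 * \<bar>Re z\<bar>" using t by (intro mult_right_mono) auto
    finally have "-1 < Re w \<and> Re w < 1" using z by (auto simp: strip_def abs_le_iff)
    then show "w \<in> strip" by (simp add: strip_def)
  qed
  ultimately show ?thesis unfolding strip_curves_def by auto
qed

lemma real_seg_length:
  assumes x: "\<bar>x\<bar> < 1"
  shows "hyp_length_strip (\<lambda>t. of_real (1 - t) * of_real x) = FF \<bar>x\<bar>"
proof -
  let ?g = "\<lambda>t. of_real (1 - t) * (of_real x :: complex)"
  have zs: "of_real x \<in> strip" using x by (auto simp: strip_def abs_less_iff)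
  have g: "?g \<in> strip_curves (of_real x) 0" by (rule seg_curve[OF zs])
  have d: "(?g has_vector_derivative - of_real x) (at t)" for t
  proof -
    have "((\<lambda>t. of_real (1 - t)) has_vector_derivative (of_real (-1) :: complex)) (at t)"
      by (rule has_vector_derivative_of_real) (auto intro!: derivative_eq_intros)
    from has_vector_derivative_mult_left[OF this, of "of_real x"] show ?thesis by simp
  qed
  have I1: "((\<lambda>t. rho_strip (?g t) * norm (- (of_real x :: complex))) has_integral hyp_length_strip ?g) {0..1}"
    by (rule length_has_integral[OF g]) (use d in auto)
  let ?h = "\<lambda>t. - FF ((1 - t) * \<bar>x\<bar>)"
  have I2: "((\<lambda>t. (pi/2) / cos (pi/2 * ((1 - t) * \<bar>x\<bar>)) * \<bar>x\<bar>) has_integral (?h 1 - ?h 0)) {0..1}"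
  proof (rule fundamental_theorem_of_calculus)
    fix t :: real assume t: "t \<in> {0..1}"
    have y: "\<bar>(1 - t) * \<bar>x\<bar>\<bar> < 1"
    proof -
      have "\<bar>(1 - t) * \<bar>x\<bar>\<bar> = (1 - t) * \<bar>x\<bar>" using t by (simp add: abs_mult)
      also have "\<dots> \<le> 1 * \<bar>x\<bar>" using t by (intro mult_right_mono) auto
      finally show ?thesis using x by simp
    qed
    have "((\<lambda>t. (1 - t) * \<bar>x\<bar>) has_real_derivative - \<bar>x\<bar>) (at t within {0..1})"
      by (auto intro!: derivative_eq_intros)
    from DERIV_chain2[OF FF_deriv[OF y] this]
    have "(?h has_real_derivative - ((pi/2) / cos (pi/2 * ((1 - t) * \<bar>x\<bar>)) * - \<bar>x\<bar>)) (at t within {0..1})"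
      by (rule DERIV_minus)
    then show "(?h has_vector_derivative (pi/2) / cos (pi/2 * ((1 - t) * \<bar>x\<bar>)) * \<bar>x\<bar>) (at t within {0..1})"
      by (simp add: has_real_derivative_iff_has_vector_derivative)
  qed simp
  have eq: "rho_strip (?g t) * norm (- (of_real x :: complex)) = (pi/2) / cos (pi/2 * ((1 - t) * \<bar>x\<bar>)) * \<bar>x\<bar>" for t
  proof (cases "x \<ge> 0")
    case True then show ?thesis by (simp add: rho_eq)
  next
    case False
    then have ax: "\<bar>x\<bar> = - x" by simp
    have "cos (pi/2 * ((1 - t) * x)) = cos (- (pi/2 * ((1 - t) * \<bar>x\<bar>)))"
      unfolding ax by (simp only: mult_minus_right minus_minus)
    also have "\<dots> = cos (pi/2 * ((1 - t) * \<bar>x\<bar>))" by (rule cos_minus)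
    finally have cc: "cos (pi/2 * ((1 - t) * x)) = cos (pi/2 * ((1 - t) * \<bar>x\<bar>))" .
    have "rho_strip (?g t) = (pi/2) / cos (pi/2 * ((1 - t) * x))" by (simp add: rho_eq)
    then show ?thesis unfolding cc by simp
  qed
  have "hyp_length_strip ?g = ?h 1 - ?h 0"
    using I1 I2 unfolding eq by (rule has_integral_unique)
  then show ?thesis by (simp add: FF_0)
qed

lemma d_lower:
  assumes z: "z \<in> strip" and "\<And>g. g \<in> strip_curves z 0 \<Longrightarrow> c \<le> hyp_length_strip g"
  shows "c \<le> d_strip z 0"
  unfolding d_strip_def
  by (rule cInf_greatest) (use seg_curve[OF z] assms(2) in auto)

lemma d_upper_real:
  assumes x: "\<bar>x\<bar> < 1"
  shows "d_strip (of_real x) 0 \<le> FF \<bar>x\<bar>"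
proof -
  have zs: "of_real x \<in> strip" using x by (auto simp: strip_def abs_less_iff)
  have "d_strip (of_real x) 0 \<le> hyp_length_strip (\<lambda>t. of_real (1 - t) * of_real x)"
    unfolding d_strip_def
    by (rule cInf_lower) (use seg_curve[OF zs] lower_0 in \<open>auto simp: bdd_below_def\<close>)
  then show ?thesis using real_seg_length[OF x] by simp
qed

theorem lemma1:
  fixes r :: real
  assumes "0 < r" and "r < 1"
  shows "closed_hyp_disc_strip (lambda_r r) \<subseteq>
           {z. Re z \<in> {-(4/pi) * arctan r .. (4/pi) * arctan r} \<and>
               Im z \<in> {-(2/pi) * lambda_r r .. (2/pi) * lambda_r r}}
         \<and> Re ` closed_hyp_disc_strip (lambda_r r) = {-(4/pi) * arctan r .. (4/pi) * arctan r}"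
proof -
  define a where "a = (4/pi) * arctan r"
  have a: "0 < a" "a < 1" using a0_bounds[OF assms] by (auto simp: a_def)
  have L: "lambda_r r = FF a" using FF_a0[OF assms] by (simp add: a_def)
  have A: "Re z \<in> {-a .. a} \<and> Im z \<in> {-(2/pi) * lambda_r r .. (2/pi) * lambda_r r}"
    if zd: "z \<in> closed_hyp_disc_strip (lambda_r r)" for z
  proof -
    have z: "z \<in> strip" and dz: "d_strip z 0 \<le> FF a"
      using zd L by (auto simp: closed_hyp_disc_strip_def)
    have x: "\<bar>Re z\<bar> < 1" using z by (auto simp: strip_def)
    have s1: "\<sigma> * FF (Re z) \<le> FF a" if "\<bar>\<sigma>\<bar> = 1" for \<sigma>
      using d_lower[OF z lower_Re[of _ z, OF _ that]] dz by linarith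
    have s2: "\<sigma> * (pi/2) * Im z \<le> FF a" if "\<bar>\<sigma>\<bar> = 1" for \<sigma>
      using d_lower[OF z lower_Im[of _ z, OF _ that]] dz by linarith
    have r1: "Re z \<le> a"
    proof (rule ccontr)
      assume "\<not> Re z \<le> a"
      then have "FF a < FF (Re z)" using a x by (intro FF_strict) auto
      then show False using s1[of 1] by simp
    qed
    have r2: "- Re z \<le> a"
    proof (rule ccontr)
      assume "\<not> - Re z \<le> a"
      then have "FF a < FF (- Re z)" using a x by (intro FF_strict) auto
      then show False using s1[of "-1"] FF_odd[OF x] by simp
    qed
    have i1: "(pi/2) * Im z \<le> FF a" using s2[of 1] by simp
    have i2: "- ((pi/2) * Im z) \<le> FF a" using s2[of "-1"] by simp
    have "Im z \<le> (2/pi) * FF a" using i1 pi_gt_zero by (simp add: field_simps)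
    moreover have "-(2/pi) * FF a \<le> Im z" using i2 pi_gt_zero by (simp add: field_simps)
    ultimately show ?thesis using r1 r2 L by auto
  qed
  have B: "x \<in> Re ` closed_hyp_disc_strip (lambda_r r)" if "x \<in> {-a .. a}" for x
  proof -
    have x: "\<bar>x\<bar> \<le> a" using that by auto
    then have x1: "\<bar>x\<bar> < 1" using a by simp
    have "d_strip (of_real x) 0 \<le> FF \<bar>x\<bar>" by (rule d_upper_real[OF x1])
    also have "\<dots> \<le> FF a" using x a by (intro FF_mono) auto
    finally have "of_real x \<in> closed_hyp_disc_strip (lambda_r r)"
      using x1 L by (auto simp: closed_hyp_disc_strip_def strip_def abs_less_iff)
    then show ?thesis by (rule rev_image_eqI) simp
  qed
  have "-(4/pi) * arctan r = -a" by (simp add: a_def)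
  then show ?thesis using A B unfolding a_def[symmetric] by (auto simp del: minus_mult_left) 
qed
end
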